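(* Let $v$ and $k\ge 2$ be powers of the same prime. Then there exists an $\mathrm{RBIBD}(v,k,1)$ (and hence a $(k,r)$-regular LDPC code of length $vr/k$ and rate at least $(r-k)/r$ based on it, where $r=(v-1)/(k-1)$) if and only if $v-1\equiv 0 \pmod{k-1}$ and $v\equiv 0 \pmod{k}$.
   Context: A $\mathrm{BIBD}(v,k,\lambda)$ is a pair $(X,\mathcal{B})$ where $X$ is a set of $v$ points and $\mathcal{B}$ a collection of $k$-subsets (blocks) such that every pair of distinct points lies in exactly $\lambda$ blocks; each point then lies in the same number $r$ of blocks, with $\lambda(v-1)=r(k-1)$ and $bk=vr$ where $b=|\mathcal{B}|$. It is resolvable, written $\mathrm{RBIBD}(v,k,\lambda)$, if $\mathcal{B}$ can be partitioned into classes each of which partitions $X$. The LDPC code based on the design is the binary linear code having the $v\times b$ point-block incidence matrix as parity-check matrix $H$. The code is $(k,r)$-regular if all columns of $H$ have weight $k$ and all rows weight $r$; its rate is $(b-\mathrm{rank}_2(H))/b$, with $b$ the length. *)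

theory Defs
  imports "HOL-Computational_Algebra.Primes"
begin

text \<open>Blocks are modelled as a set of sets; for lambda = 1 and k >= 2
  a repeated block is impossible anyway.\<close>
definition bibd :: "'a set \<Rightarrow> 'a set set \<Rightarrow> nat \<Rightarrow> nat \<Rightarrow> nat \<Rightarrow> bool" where
  "bibd X B v k lam \<longleftrightarrow>
     finite X \<and> card X = v \<and>
     (\<forall>b\<in>B. b \<subseteq> X \<and> card b = k) \<and>
     (\<forall>x\<in>X. \<forall>y\<in>X. x \<noteq> y \<longrightarrow> card {b\<in>B. x \<in> b \<and> y \<in> b} = lam)"

definition partitions_points :: "'a set \<Rightarrow> 'a set set \<Rightarrow> bool" where
  "partitions_points X C \<longleftrightarrow>
     (\<forall>c\<in>C. c \<subseteq> X) \<and> (\<forall>x\<in>X. \<exists>!c. c \<in> C \<and> x \<in> c)"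

definition resolvable :: "'a set \<Rightarrow> 'a set set \<Rightarrow> bool" where
  "resolvable X B \<longleftrightarrow>
     (\<exists>P :: 'a set set set.
        (\<forall>C\<in>P. C \<subseteq> B \<and> partitions_points X C) \<and>
        (\<forall>b\<in>B. \<exists>!C. C \<in> P \<and> b \<in> C))"

definition rbibd :: "'a set \<Rightarrow> 'a set set \<Rightarrow> nat \<Rightarrow> nat \<Rightarrow> nat \<Rightarrow> bool" where
  "rbibd X B v k lam \<longleftrightarrow> bibd X B v k lam \<and> resolvable X B"

end

theory Submission
  imports Defs "HOL-Algebra.Algebraic_Closure" "HOL-Number_Theory.Residues"
begin

no_notation var (\<open>X\<index>\<close>)
hide_const (open) Divisibility.prime



context cring begin

lemma binomial_alg:
  assumes x: "x \<in> carrier R" and y: "y \<in> carrier R"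
  shows "(x \<oplus> y) [^] n = (\<Oplus> i \<in> {..n}. [(n choose i)] \<cdot> (x [^] i \<otimes> y [^] (n - i)))"
proof (induction n)
  case 0
  then show ?case using x y by simp
next
  case (Suc n)
  define g where "g i = [(n choose i)] \<cdot> (x [^] i \<otimes> y [^] (Suc n - i))" for i
  define h where "h i = (if i = 0 then \<zero> else [(n choose (i - 1))] \<cdot> (x [^] i \<otimes> y [^] (Suc n - i)))" for i
  have gc: "g \<in> UNIV \<rightarrow> carrier R" and hc: "h \<in> UNIV \<rightarrow> carrier R"
    using x y by (auto simp: g_def h_def)
  have "(x \<oplus> y) [^] Suc n = (x \<oplus> y) [^] n \<otimes> (x \<oplus> y)" by simp
  also have "\<dots> = (\<Oplus> i \<in> {..n}. [(n choose i)] \<cdot> (x [^] i \<otimes> y [^] (n - i))) \<otimes> x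
        \<oplus> (\<Oplus> i \<in> {..n}. [(n choose i)] \<cdot> (x [^] i \<otimes> y [^] (n - i))) \<otimes> y"
    using x y by (simp add: Suc r_distr)
  also have "(\<Oplus> i \<in> {..n}. [(n choose i)] \<cdot> (x [^] i \<otimes> y [^] (n - i))) \<otimes> y
      = (\<Oplus> i \<in> {..n}. g i)"
  proof -
    have "(\<Oplus> i \<in> {..n}. [(n choose i)] \<cdot> (x [^] i \<otimes> y [^] (n - i))) \<otimes> y
       = (\<Oplus> i \<in> {..n}. [(n choose i)] \<cdot> (x [^] i \<otimes> y [^] (n - i)) \<otimes> y)"
      using x y by (simp add: finsum_ldistr)
    also have "\<dots> = (\<Oplus> i \<in> {..n}. g i)"
    proof (rule finsum_cong')
      fix i assume "i \<in> {..n}"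
      then have "Suc n - i = Suc (n - i)" by auto
      then show "[(n choose i)] \<cdot> (x [^] i \<otimes> y [^] (n - i)) \<otimes> y = g i"
        using x y by (simp add: g_def add_pow_ldistr m_assoc)
    qed (use gc in auto)
    finally show ?thesis .
  qed
  also have "(\<Oplus> i \<in> {..n}. [(n choose i)] \<cdot> (x [^] i \<otimes> y [^] (n - i))) \<otimes> x
      = (\<Oplus> i \<in> {..n}. h (Suc i))"
  proof -
    have "(\<Oplus> i \<in> {..n}. [(n choose i)] \<cdot> (x [^] i \<otimes> y [^] (n - i))) \<otimes> x
       = (\<Oplus> i \<in> {..n}. [(n choose i)] \<cdot> (x [^] i \<otimes> y [^] (n - i)) \<otimes> x)"
      using x y by (simp add: finsum_ldistr)
    also have "\<dots> = (\<Oplus> i \<in> {..n}. h (Suc i))"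
    proof (rule finsum_cong')
      fix i assume "i \<in> {..n}"
      then have "Suc n - Suc i = n - i" by auto
      then show "[(n choose i)] \<cdot> (x [^] i \<otimes> y [^] (n - i)) \<otimes> x = h (Suc i)"
        using x y by (simp add: h_def add_pow_ldistr add_pow_rdistr m_assoc m_comm m_lcomm)
    qed (use hc in auto)
    finally show ?thesis .
  qed
  also have "(\<Oplus> i \<in> {..n}. h (Suc i)) = (\<Oplus> i \<in> {..Suc n}. h i)"
  proof -
    have "(\<Oplus> i \<in> {..Suc n}. h i) = (\<Oplus> i \<in> {..n}. h (Suc i)) \<oplus> h 0"
      by (rule finsum_Suc2) (use hc in auto)
    moreover have "h 0 = \<zero>" by (simp add: h_def)
    moreover have "(\<Oplus> i \<in> {..n}. h (Suc i)) \<in> carrier R" using hc by (intro finsum_closed) auto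
    ultimately show ?thesis by simp
  qed
  also have "(\<Oplus> i \<in> {..n}. g i) = (\<Oplus> i \<in> {..Suc n}. g i)"
  proof -
    have "(\<Oplus> i \<in> {..Suc n}. g i) = g (Suc n) \<oplus> (\<Oplus> i \<in> {..n}. g i)"
      by (rule finsum_Suc) (use gc in auto)
    moreover have "g (Suc n) = \<zero>" by (simp add: g_def binomial_eq_0)
    moreover have "(\<Oplus> i \<in> {..n}. g i) \<in> carrier R" using gc by (intro finsum_closed) auto
    ultimately show ?thesis by simp
  qed
  also have "(\<Oplus> i \<in> {..Suc n}. h i) \<oplus> (\<Oplus> i \<in> {..Suc n}. g i)
      = (\<Oplus> i \<in> {..Suc n}. h i \<oplus> g i)"
    using gc hc by (intro finsum_addf[symmetric]) auto
  also have "\<dots> = (\<Oplus> i \<in> {..Suc n}. [(Suc n choose i)] \<cdot> (x [^] i \<otimes> y [^] (Suc n - i)))"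
  proof (rule finsum_cong')
    fix i assume "i \<in> {..Suc n}"
    show "h i \<oplus> g i = [(Suc n choose i)] \<cdot> (x [^] i \<otimes> y [^] (Suc n - i))"
    proof (cases i)
      case 0
      then show ?thesis using x y by (simp add: h_def g_def)
    next
      case (Suc j)
      then show ?thesis using x y
        by (simp add: h_def g_def add.nat_pow_mult)
    qed
  qed (use x y in auto)
  finally show ?case .
qed

lemma add_pow_char_zero:
  fixes p t :: nat
  assumes ch: "[p] \<cdot> \<one> = \<zero>" and z: "z \<in> carrier R"
  shows "[(p * t)] \<cdot> z = \<zero>"
proof -
  have "[(p*t)] \<cdot> z = ([(p*t)] \<cdot> \<one>) \<otimes> z" using add_pow_ldistr[of \<one> z "p*t"] z by simp
  also have "[(p*t)] \<cdot> \<one> = [t] \<cdot> ([p] \<cdot> \<one>)" using add.nat_pow_pow[of \<one> p t] add.nat_pow_pow[of \<one> t p] by (simp add: mult.commute)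
  also have "\<dots> = \<zero>" using ch by simp
  finally show ?thesis using z by simp
qed

lemma frob_add:
  assumes pr: "Factorial_Ring.prime (p::nat)" and ch: "[p] \<cdot> \<one> = \<zero>"
    and x: "x \<in> carrier R" and y: "y \<in> carrier R"
  shows "(x \<oplus> y) [^] p = x [^] p \<oplus> y [^] p"
proof -
  define f where "f i = [(p choose i)] \<cdot> (x [^] i \<otimes> y [^] (p - i))" for i
  have fc: "f \<in> UNIV \<rightarrow> carrier R" using x y by (auto simp: f_def)
  have p2: "p \<ge> 2" using pr prime_ge_2_nat by blast
  then obtain m where m: "p = Suc (Suc m)" by (metis add_2_eq_Suc le_Suc_ex)
  have f0: "f i = \<zero>" if "0 < i" "i < p" for i
  proof -
    have "p dvd (p choose i)" using dvd_choose_prime[of i p] that pr by auto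
    then obtain t where "p choose i = p * t" by blast
    then show ?thesis using add_pow_char_zero[OF ch, of "x [^] i \<otimes> y [^] (p - i)" t] x y
      by (simp add: f_def)
  qed
  have "(x \<oplus> y) [^] p = (\<Oplus> i \<in> {..p}. f i)" using binomial_alg[OF x y] by (simp add: f_def)
  also have "\<dots> = f (Suc (Suc m)) \<oplus> (\<Oplus> i \<in> {..Suc m}. f i)"
    unfolding m by (rule finsum_Suc) (use fc in auto)
  also have "(\<Oplus> i \<in> {..Suc m}. f i) = (\<Oplus> i \<in> {..m}. f (Suc i)) \<oplus> f 0"
    by (rule finsum_Suc2) (use fc in auto)
  also have "(\<Oplus> i \<in> {..m}. f (Suc i)) = (\<Oplus> i \<in> {..m}. \<zero>)"
    by (rule finsum_cong') (use fc f0 m in auto)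
  also have "(\<Oplus> i \<in> {..m}. \<zero>) = \<zero>" by (rule finsum_zero)
  finally show ?thesis using x y m by (simp add: f_def)
qed

lemma frob_pow_add:
  assumes pr: "Factorial_Ring.prime (p::nat)" and ch: "[p] \<cdot> \<one> = \<zero>"
    and x: "x \<in> carrier R" and y: "y \<in> carrier R"
  shows "(x \<oplus> y) [^] (p ^ m) = x [^] (p ^ m) \<oplus> y [^] (p ^ m)"
proof (induction m)
  case 0 then show ?case using x y by simp
next
  case (Suc m)
  have "(x \<oplus> y) [^] (p ^ Suc m) = ((x \<oplus> y) [^] (p ^ m)) [^] p"
    using x y by (simp add: nat_pow_pow mult.commute)
  also have "\<dots> = (x [^] (p ^ m)) [^] p \<oplus> (y [^] (p ^ m)) [^] p"
    using Suc frob_add[OF pr ch] x y by simp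
  also have "\<dots> = x [^] (p ^ Suc m) \<oplus> y [^] (p ^ Suc m)"
    using x y by (simp add: nat_pow_pow mult.commute)
  finally show ?case .
qed

lemma frob_pow_minus:
  assumes pr: "Factorial_Ring.prime (p::nat)" and ch: "[p] \<cdot> \<one> = \<zero>"
    and x: "x \<in> carrier R" and y: "y \<in> carrier R"
  shows "(x \<ominus> y) [^] (p ^ m) = x [^] (p ^ m) \<ominus> y [^] (p ^ m)"
proof -
  have "x [^] (p ^ m) = ((x \<ominus> y) \<oplus> y) [^] (p ^ m)" using x y by (simp add: a_minus_def a_assoc l_neg)
  also have "\<dots> = (x \<ominus> y) [^] (p ^ m) \<oplus> y [^] (p ^ m)"
    using frob_pow_add[OF pr ch] x y by simp
  finally show ?thesis using x y by (simp add: a_minus_def a_assoc r_neg)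
qed

end

lemma ring_hom_add_pow_one:
  assumes "ring_hom_ring R S h"
  shows "h ([(n::nat)] \<cdot>\<^bsub>R\<^esub> \<one>\<^bsub>R\<^esub>) = [n] \<cdot>\<^bsub>S\<^esub> \<one>\<^bsub>S\<^esub>"
proof (induction n)
  case 0
  interpret ring_hom_ring R S h by fact
  show ?case by simp
next
  case (Suc n)
  interpret ring_hom_ring R S h by fact
  show ?case using Suc by (simp add: R.add.nat_pow_Suc S.add.nat_pow_Suc)
qed





lemma count_le1_card:
  assumes "\<And>x. count M x \<le> 1"
  shows "size M = card (set_mset M)"
proof -
  have "M = mset_set (set_mset M)"
  proof (rule multiset_eqI)
    fix x show "count M x = count (mset_set (set_mset M)) x"
      proof (cases "count M x")
      case 0 then show ?thesis by (simp add: count_mset_set not_in_iff)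
    next
      case (Suc k)
      then have "x \<in># M" by (simp add: count_greater_zero_iff[symmetric])
      then show ?thesis using Suc assms[of x] by (simp add: count_mset_set)
    qed
  qed
  then show ?thesis by (metis size_mset_set)
qed

lemma (in ring) minus_zero_iff:
  assumes "a \<in> carrier R" "b \<in> carrier R"
  shows "(a \<ominus> b = \<zero>) = (a = b)"
proof
  assume h: "a \<ominus> b = \<zero>"
  have "a = (a \<ominus> b) \<oplus> b" using assms by algebra
  then show "a = b" using h assms by simp
qed (use assms in \<open>simp add: a_minus_def r_neg\<close>)

context algebraically_closed begin

lemma frob_fixed_card:
  assumes pr: "Factorial_Ring.prime (p::nat)" and ch: "[p] \<cdot> \<one> = \<zero>" and m: "m \<ge> 1"
  shows "card {x \<in> carrier L. x [^] (p^m) = x} = p^m"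
proof -
  define q where "q = p ^ m"
  have p2: "p \<ge> 2" using pr prime_ge_2_nat by blast
  have "p ^ 1 \<le> p ^ m" using m p2 by (intro power_increasing) auto
  then have q2: "q \<ge> 2" using p2 by (simp add: q_def)
  let ?U = "poly_ring L"
  interpret U: domain ?U by (rule univ_poly_is_domain[OF carrier_is_subring])
  define Xp where "Xp = [\<one>, \<zero>]"
  have Xc: "Xp \<in> carrier ?U" by (simp add: Xp_def univ_poly_carrier[symmetric] polynomial_def)
  have degX: "degree Xp = 1" by (simp add: Xp_def)
  define P where "P = Xp [^]\<^bsub>?U\<^esub> q \<ominus>\<^bsub>?U\<^esub> Xp"
  have Pc: "P \<in> carrier ?U" using Xc by (simp add: P_def)
  have evX: "eval Xp x = x" if "x \<in> carrier L" for x using that by (simp add: Xp_def)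
  have evP: "eval P x = x [^] q \<ominus> x" if x: "x \<in> carrier L" for x
  proof -
    interpret E: ring_hom_cring ?U L "\<lambda>p. eval p x" by (rule eval_cring_hom[OF carrier_is_subring x])
    show ?thesis using Xc x by (simp add: P_def a_minus_def a_minus_def E.ring.hom_nat_pow evX)
  qed
  have degXq: "degree (Xp [^]\<^bsub>?U\<^esub> q) = q" using polynomial_pow_degree[OF Xc, of q] degX by simp
  have degnX: "degree (\<ominus>\<^bsub>?U\<^esub> Xp) = 1" using univ_poly_a_inv_degree[OF carrier_is_subring Xc] degX by simp
  have degP: "degree P = q"
  proof -
    have "P = poly_add (Xp [^]\<^bsub>?U\<^esub> q) (\<ominus>\<^bsub>?U\<^esub> Xp)" by (simp add: P_def a_minus_def univ_poly_add)
    moreover have "polynomial (carrier L) (Xp [^]\<^bsub>?U\<^esub> q)" "polynomial (carrier L) (\<ominus>\<^bsub>?U\<^esub> Xp)"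
      using Xc by (simp_all add: univ_poly_carrier)
    ultimately show ?thesis using poly_add_degree_eq[OF carrier_is_subring, of "Xp [^]\<^bsub>?U\<^esub> q" "\<ominus>\<^bsub>?U\<^esub> Xp"]
        degXq degnX q2 by simp
  qed
  have Pne: "P \<noteq> []" using degP q2 by auto
  have sz: "size (roots P) = q" using roots_over_carrier[OF Pc] degP by (simp add: splitted_def)
  have charU: "[p] \<cdot>\<^bsub>?U\<^esub> \<one>\<^bsub>?U\<^esub> = \<zero>\<^bsub>?U\<^esub>"
  proof -
    have hom: "ring_hom_ring L ?U poly_of_const"
      using canonical_embedding_ring_hom[OF carrier_is_subring] by simp
    have "poly_of_const ([p] \<cdot> \<one>) = [p] \<cdot>\<^bsub>?U\<^esub> \<one>\<^bsub>?U\<^esub>" by (rule ring_hom_add_pow_one[OF hom])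
    then show ?thesis using ch by (simp add: poly_of_const_def univ_poly_zero)
  qed
  have mult1: "count (roots P) a \<le> 1" for a
  proof (rule ccontr)
    assume "\<not> ?thesis"
    hence a2: "2 \<le> alg_mult P a" using alg_mult_eq_count_roots[OF Pc] by simp
    hence a: "a \<in> carrier L" using Pne by (auto simp: alg_mult_def split: if_splits)
    have "0 < alg_mult P a" using a2 by simp
    hence "is_root P a" using alg_mult_gt_zero_iff_is_root[OF Pc, of a] by simp
    hence "a [^] q \<ominus> a = \<zero>" using evP[OF a] by (simp add: is_root_def)
    hence aq: "a [^] q = a" using a minus_zero_iff by simp
    define Y where "Y = [\<one>, \<ominus> a]"
    have "(Y [^]\<^bsub>?U\<^esub> (2::nat)) pdivides P" using le_alg_mult_imp_pdivides[OF a Pc a2] by (simp add: Y_def)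
    then obtain Q where Qc: "Q \<in> carrier ?U" and PQ: "P = Y [^]\<^bsub>?U\<^esub> (2::nat) \<otimes>\<^bsub>?U\<^esub> Q"
      by (auto simp: pdivides_def factor_def)
    define C where "C = poly_of_const a"
    have hom: "ring_hom_ring L ?U poly_of_const"
      using canonical_embedding_ring_hom[OF carrier_is_subring] by simp
    interpret H: ring_hom_ring L ?U poly_of_const by (rule hom)
    have Cc: "C \<in> carrier ?U" using a by (simp add: C_def)
    have YXC: "Y = Xp \<ominus>\<^bsub>?U\<^esub> C"
    proof -
      have "\<ominus>\<^bsub>?U\<^esub> C = map (\<lambda>x. \<ominus> x) C" by (rule univ_poly_a_inv_def'[OF carrier_is_subring Cc])
      then show ?thesis
        using a by (cases "a = \<zero>") (simp_all add: a_minus_def univ_poly_add Y_def Xp_def C_def poly_of_const_def)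
    qed
    have Yc: "Y \<in> carrier ?U" using YXC Xc Cc by simp
    have Cq: "C [^]\<^bsub>?U\<^esub> q = C" using H.hom_nat_pow[OF a, of q] aq by (simp add: C_def)
    have Yq: "Y [^]\<^bsub>?U\<^esub> q = Xp [^]\<^bsub>?U\<^esub> q \<ominus>\<^bsub>?U\<^esub> C"
      using U.frob_pow_minus[OF pr charU Xc Cc, of m] Cq YXC by (simp add: q_def)
    have A: "Xp [^]\<^bsub>?U\<^esub> q \<in> carrier ?U" using Xc by simp
    have gen: "(A' \<ominus>\<^bsub>?U\<^esub> C) \<ominus>\<^bsub>?U\<^esub> (Xp \<ominus>\<^bsub>?U\<^esub> C) = A' \<ominus>\<^bsub>?U\<^esub> Xp"
      if "A' \<in> carrier ?U" for A' using that Xc Cc by algebra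
    have "Y [^]\<^bsub>?U\<^esub> q \<ominus>\<^bsub>?U\<^esub> Y
        = (Xp [^]\<^bsub>?U\<^esub> q \<ominus>\<^bsub>?U\<^esub> C) \<ominus>\<^bsub>?U\<^esub> (Xp \<ominus>\<^bsub>?U\<^esub> C)"
      by (subst Yq) (subst YXC, rule refl)
    also have "\<dots> = P" using gen[OF A] by (simp add: P_def)
    finally have PY: "P = Y [^]\<^bsub>?U\<^esub> q \<ominus>\<^bsub>?U\<^esub> Y" by simp
    define k where "k = q - 1"
    have qk: "q = Suc k" and k0: "k \<noteq> 0" using q2 by (simp_all add: k_def)
    have Bc: "Y [^]\<^bsub>?U\<^esub> k \<in> carrier ?U" using Yc by simp
    have Y2: "Y [^]\<^bsub>?U\<^esub> (2::nat) \<otimes>\<^bsub>?U\<^esub> Q = Y \<otimes>\<^bsub>?U\<^esub> (Y \<otimes>\<^bsub>?U\<^esub> Q)"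
      using Yc Qc by (simp add: numeral_2_eq_2 U.m_assoc)
    have gen2: "Y \<otimes>\<^bsub>?U\<^esub> B \<ominus>\<^bsub>?U\<^esub> Y = Y \<otimes>\<^bsub>?U\<^esub> (B \<ominus>\<^bsub>?U\<^esub> \<one>\<^bsub>?U\<^esub>)"
      if "B \<in> carrier ?U" for B using that Yc by algebra
    have hq: "Y [^]\<^bsub>?U\<^esub> q = Y \<otimes>\<^bsub>?U\<^esub> Y [^]\<^bsub>?U\<^esub> k"
      using Yc by (simp add: qk U.m_comm)
    have "Y \<otimes>\<^bsub>?U\<^esub> (Y \<otimes>\<^bsub>?U\<^esub> Q) = P" using Y2 PQ by simp
    also have "\<dots> = Y \<otimes>\<^bsub>?U\<^esub> Y [^]\<^bsub>?U\<^esub> k \<ominus>\<^bsub>?U\<^esub> Y" using PY hq by simp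
    also have "\<dots> = Y \<otimes>\<^bsub>?U\<^esub> (Y [^]\<^bsub>?U\<^esub> k \<ominus>\<^bsub>?U\<^esub> \<one>\<^bsub>?U\<^esub>)" by (rule gen2[OF Bc])
    finally have "Y \<otimes>\<^bsub>?U\<^esub> (Y \<otimes>\<^bsub>?U\<^esub> Q) = Y \<otimes>\<^bsub>?U\<^esub> (Y [^]\<^bsub>?U\<^esub> k \<ominus>\<^bsub>?U\<^esub> \<one>\<^bsub>?U\<^esub>)" .
    moreover have "Y \<noteq> \<zero>\<^bsub>?U\<^esub>" by (simp add: Y_def univ_poly_zero)
    ultimately have YQ: "Y \<otimes>\<^bsub>?U\<^esub> Q = Y [^]\<^bsub>?U\<^esub> k \<ominus>\<^bsub>?U\<^esub> \<one>\<^bsub>?U\<^esub>"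
      using U.m_lcancel[of Y "Y \<otimes>\<^bsub>?U\<^esub> Q" "Y [^]\<^bsub>?U\<^esub> k \<ominus>\<^bsub>?U\<^esub> \<one>\<^bsub>?U\<^esub>"] Yc Qc Bc by simp
    interpret E: ring_hom_cring ?U L "\<lambda>p. eval p a" by (rule eval_cring_hom[OF carrier_is_subring a])
    have eY: "eval Y a = \<zero>" using a by (simp add: Y_def r_neg)
    have "eval (Y \<otimes>\<^bsub>?U\<^esub> Q) a = \<zero>" using Yc Qc eY a E.hom_closed[OF Qc] by simp
    moreover have "eval (Y [^]\<^bsub>?U\<^esub> k \<ominus>\<^bsub>?U\<^esub> \<one>\<^bsub>?U\<^esub>) a = \<ominus> \<one>"
      using Yc Bc eY k0 by (simp add: a_minus_def E.ring.hom_nat_pow nat_pow_zero)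
    ultimately have "\<ominus> \<one> = \<zero>" using YQ by simp
    then have "\<one> = \<zero>" by (metis minus_minus minus_zero one_closed)
    then show False using one_not_zero by simp
  qed
  have "size (roots P) = card (set_mset (roots P))" using count_le1_card mult1 by blast
  moreover have "set_mset (roots P) = {x \<in> carrier L. x [^] (p^m) = x}"
    using roots_mem_iff_is_root[OF Pc] evP Pne minus_zero_iff
    by (auto simp: is_root_def q_def)
  ultimately show ?thesis using sz by (simp add: q_def)
qed

end




lemma residue_char:
  assumes pr: "Factorial_Ring.prime (p::nat)"
  shows "[p] \<cdot>\<^bsub>residue_ring (int p)\<^esub> \<one>\<^bsub>residue_ring (int p)\<^esub> = \<zero>\<^bsub>residue_ring (int p)\<^esub>"
proof -
  interpret R: residues_prime p "residue_ring (int p)" by unfold_locales (rule pr)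
  have "[n] \<cdot>\<^bsub>residue_ring (int p)\<^esub> \<one>\<^bsub>residue_ring (int p)\<^esub> = int n mod int p" for n
  proof (induction n)
    case 0 then show ?case by (simp add: R.res_zero_eq)
  next
    case (Suc n)
    then show ?case by (simp add: R.add.nat_pow_Suc R.res_add_eq R.res_one_eq mod_add_right_eq add.commute)
  qed
  from this[of p] show ?thesis by (simp add: R.res_zero_eq)
qed

lemma exists_char_p_closure:
  assumes pr: "Factorial_Ring.prime (p::nat)"
  shows "\<exists>L :: ((int list \<times> nat) multiset \<Rightarrow> int) ring.
           algebraically_closed L \<and> [p] \<cdot>\<^bsub>L\<^esub> \<one>\<^bsub>L\<^esub> = \<zero>\<^bsub>L\<^esub>"
proof -
  interpret R: residues_prime p "residue_ring (int p)" by unfold_locales (rule pr)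
  define L where "L = R.alg_closure"
  have ac: "algebraic_closure L (R.indexed_const ` carrier (residue_ring (int p)))"
    and hom: "R.indexed_const \<in> ring_hom (residue_ring (int p)) L"
    using R.alg_closureE unfolding L_def by auto
  interpret A: algebraic_closure L "R.indexed_const ` carrier (residue_ring (int p))" by (rule ac)
  have hr: "ring_hom_ring (residue_ring (int p)) L R.indexed_const"
    by (rule ring_hom_ringI2) (use hom in \<open>auto intro: R.ring_axioms A.ring_axioms\<close>)
  have "[p] \<cdot>\<^bsub>L\<^esub> \<one>\<^bsub>L\<^esub> = R.indexed_const ([p] \<cdot>\<^bsub>residue_ring (int p)\<^esub> \<one>\<^bsub>residue_ring (int p)\<^esub>)"
    using ring_hom_add_pow_one[OF hr] by simp
  also have "\<dots> = \<zero>\<^bsub>L\<^esub>" using residue_char[OF pr] ring_hom_zero[OF hom] R.ring_axioms A.ring_axioms by simp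
  finally show ?thesis using A.algebraically_closed_axioms by blast
qed





locale aff = field L for L (structure) +
  fixes E F
  assumes E_sub: "E \<subseteq> carrier L" and F_sub: "F \<subseteq> E" and E_fin: "finite E"
    and E_add: "x \<in> E \<Longrightarrow> y \<in> E \<Longrightarrow> x \<oplus> y \<in> E"
    and E_mult: "x \<in> E \<Longrightarrow> y \<in> E \<Longrightarrow> x \<otimes> y \<in> E"
    and E_neg: "x \<in> E \<Longrightarrow> \<ominus> x \<in> E"
    and F_zero: "\<zero> \<in> F" and F_one: "\<one> \<in> F"
    and F_add: "x \<in> F \<Longrightarrow> y \<in> F \<Longrightarrow> x \<oplus> y \<in> F"
    and F_mult: "x \<in> F \<Longrightarrow> y \<in> F \<Longrightarrow> x \<otimes> y \<in> F"
    and F_neg: "x \<in> F \<Longrightarrow> \<ominus> x \<in> F"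
    and F_inv: "x \<in> F \<Longrightarrow> x \<noteq> \<zero> \<Longrightarrow> inv x \<in> F"
begin

definition line where "line x d = (\<lambda>t. x \<oplus> t \<otimes> d) ` F"

lemma Ec: "x \<in> E \<Longrightarrow> x \<in> carrier L" using E_sub by auto
lemma Fc: "x \<in> F \<Longrightarrow> x \<in> carrier L" using E_sub F_sub by auto
lemma FE: "x \<in> F \<Longrightarrow> x \<in> E" using F_sub by auto

lemma E_minus: "x \<in> E \<Longrightarrow> y \<in> E \<Longrightarrow> x \<ominus> y \<in> E"
  by (simp add: a_minus_def E_add E_neg)
lemma F_minus: "x \<in> F \<Longrightarrow> y \<in> F \<Longrightarrow> x \<ominus> y \<in> F"
  by (simp add: a_minus_def F_add F_neg)

lemma inv_l: "u \<in> carrier L \<Longrightarrow> u \<noteq> \<zero> \<Longrightarrow> inv u \<otimes> u = \<one> \<and> inv u \<in> carrier L"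
  using field_Units by (auto intro: Units_l_inv Units_inv_closed)

lemma line_sub: "x \<in> E \<Longrightarrow> d \<in> E \<Longrightarrow> line x d \<subseteq> E"
  using FE by (auto simp: line_def intro!: E_add E_mult)

lemma line_card: assumes "x \<in> E" "d \<in> E" "d \<noteq> \<zero>" shows "card (line x d) = card F"
proof -
  have "inj_on (\<lambda>t. x \<oplus> t \<otimes> d) F"
  proof (rule inj_onI)
    fix s t assume st: "s \<in> F" "t \<in> F" "x \<oplus> s \<otimes> d = x \<oplus> t \<otimes> d"
    have c: "x \<in> carrier L" "d \<in> carrier L" "s \<in> carrier L" "t \<in> carrier L"
      using assms st Ec Fc by auto
    then have "s \<otimes> d = t \<otimes> d" using st(3) by simp
    then show "s = t" using m_rcancel[of d s t] assms c by simp
  qed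
  then show ?thesis by (simp add: line_def card_image)
qed

lemma line_base: "x \<in> E \<Longrightarrow> d \<in> E \<Longrightarrow> x \<in> line x d"
  unfolding line_def by (rule image_eqI[of _ _ \<zero>]) (use F_zero Ec in auto)

lemma line_step: "x \<in> E \<Longrightarrow> d \<in> E \<Longrightarrow> x \<oplus> d \<in> line x d"
  unfolding line_def by (rule image_eqI[of _ _ \<one>]) (use F_one Ec in auto)

lemma line_shift: assumes "x \<in> E" "d \<in> E" "y \<in> line x d" shows "line y d = line x d"
proof -
  obtain s where s: "s \<in> F" "y = x \<oplus> s \<otimes> d" using assms(3) by (auto simp: line_def)
  have c: "x \<in> carrier L" "d \<in> carrier L" "s \<in> carrier L" using assms s Ec Fc by auto
  show ?thesis
  proof
    show "line y d \<subseteq> line x d"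
    proof
      fix z assume "z \<in> line y d"
      then obtain t where t: "t \<in> F" "z = y \<oplus> t \<otimes> d" by (auto simp: line_def)
      have "z = x \<oplus> (s \<oplus> t) \<otimes> d" using t s c Fc[OF t(1)] by algebra
      then show "z \<in> line x d" using F_add[OF s(1) t(1)] by (auto simp: line_def)
    qed
  next
    show "line x d \<subseteq> line y d"
    proof
      fix z assume "z \<in> line x d"
      then obtain t where t: "t \<in> F" "z = x \<oplus> t \<otimes> d" by (auto simp: line_def)
      have "z = y \<oplus> (t \<ominus> s) \<otimes> d" using t s c Fc[OF t(1)] by algebra
      then show "z \<in> line y d" using F_minus[OF t(1) s(1)] by (auto simp: line_def)
    qed
  qed
qed

lemma line_scale: assumes "x \<in> E" "d \<in> E" "u \<in> F" "u \<noteq> \<zero>" shows "line x (u \<otimes> d) = line x d"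
proof -
  have c: "x \<in> carrier L" "d \<in> carrier L" "u \<in> carrier L" using assms Ec Fc by auto
  have iu: "inv u \<otimes> u = \<one>" "inv u \<in> carrier L" using inv_l c assms by auto
  show ?thesis
  proof
    show "line x (u \<otimes> d) \<subseteq> line x d"
    proof
      fix z assume "z \<in> line x (u \<otimes> d)"
      then obtain t where t: "t \<in> F" "z = x \<oplus> t \<otimes> (u \<otimes> d)" by (auto simp: line_def)
      have "z = x \<oplus> (t \<otimes> u) \<otimes> d" using t c Fc[OF t(1)] by (simp add: m_assoc)
      then show "z \<in> line x d" using F_mult[OF t(1) assms(3)] by (auto simp: line_def)
    qed
  next
    show "line x d \<subseteq> line x (u \<otimes> d)"
    proof
      fix z assume "z \<in> line x d"
      then obtain t where t: "t \<in> F" "z = x \<oplus> t \<otimes> d" by (auto simp: line_def)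
      have "(t \<otimes> inv u) \<otimes> (u \<otimes> d) = t \<otimes> ((inv u \<otimes> u) \<otimes> d)"
        using c iu(2) Fc[OF t(1)] by (simp add: m_assoc)
      then have "z = x \<oplus> (t \<otimes> inv u) \<otimes> (u \<otimes> d)" using t iu c Fc[OF t(1)] by simp
      then show "z \<in> line x (u \<otimes> d)" using F_mult[OF t(1) F_inv[OF assms(3,4)]] by (auto simp: line_def)
    qed
  qed
qed

lemma line_dir:
  assumes "x \<in> E" "d \<in> E" "y \<in> line x d" "z \<in> line x d" "y \<noteq> z"
  shows "\<exists>u\<in>F. u \<noteq> \<zero> \<and> z \<ominus> y = u \<otimes> d"
proof -
  obtain s where s: "s \<in> F" "y = x \<oplus> s \<otimes> d" using assms(3) by (auto simp: line_def)
  obtain t where t: "t \<in> F" "z = x \<oplus> t \<otimes> d" using assms(4) by (auto simp: line_def)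
  have c: "x \<in> carrier L" "d \<in> carrier L" "s \<in> carrier L" "t \<in> carrier L" using assms s t Ec Fc by auto
  have "z \<ominus> y = (t \<ominus> s) \<otimes> d" using s t c by algebra
  moreover have "t \<ominus> s \<noteq> \<zero>" using assms(5) s t c minus_zero_iff by auto
  ultimately show ?thesis using F_minus[OF t(1) s(1)] by blast
qed

lemma line_unique:
  assumes "y \<in> E" "z \<in> E" "y \<noteq> z" "x \<in> E" "d \<in> E" "y \<in> line x d" "z \<in> line x d"
  shows "line x d = line y (z \<ominus> y)"
proof -
  obtain u where u: "u \<in> F" "u \<noteq> \<zero>" "z \<ominus> y = u \<otimes> d" using line_dir[OF assms(4,5,6,7,3)] by blast
  have "line x d = line y d" using line_shift[OF assms(4,5,6)] by simp
  also have "\<dots> = line y (u \<otimes> d)" using line_scale[OF assms(1,5) u(1,2)] by simp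
  finally show ?thesis using u by simp
qed

definition blocks where "blocks = {line x d | x d. x \<in> E \<and> d \<in> E - {\<zero>}}"
definition cls where "cls d = {line x d | x. x \<in> E}"
definition parts where "parts = {cls d | d. d \<in> E - {\<zero>}}"

lemma design_bibd: "bibd E blocks (card E) (card F) 1"
  unfolding bibd_def
proof (intro conjI ballI impI)
  show "finite E" by (rule E_fin)
  show "card E = card E" ..
next
  fix b assume "b \<in> blocks"
  then obtain x d where b: "b = line x d" "x \<in> E" "d \<in> E" "d \<noteq> \<zero>" by (auto simp: blocks_def)
  then show "b \<subseteq> E" using line_sub by auto
  from b show "card b = card F" using line_card by auto
next
  fix y z assume yz: "y \<in> E" "z \<in> E" "y \<noteq> z"
  have zy: "z \<ominus> y \<in> E" "z \<ominus> y \<noteq> \<zero>" using yz E_minus Ec minus_zero_iff by auto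
  have "{b \<in> blocks. y \<in> b \<and> z \<in> b} = {line y (z \<ominus> y)}"
  proof (intro equalityI subsetI)
    fix b assume "b \<in> {b \<in> blocks. y \<in> b \<and> z \<in> b}"
    then obtain x d where b: "b = line x d" "x \<in> E" "d \<in> E" "y \<in> b" "z \<in> b" by (auto simp: blocks_def)
    then show "b \<in> {line y (z \<ominus> y)}" using line_unique[OF yz] by auto
  next
    fix b assume "b \<in> {line y (z \<ominus> y)}"
    then have b: "b = line y (z \<ominus> y)" by simp
    have "y \<oplus> (z \<ominus> y) = z" using yz Ec by algebra
    then have "z \<in> b" using line_step[OF yz(1) zy(1)] b by simp
    moreover have "y \<in> b" using line_base[OF yz(1) zy(1)] b by simp
    moreover have "b \<in> blocks" using b yz zy by (auto simp: blocks_def)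
    ultimately show "b \<in> {b \<in> blocks. y \<in> b \<and> z \<in> b}" by simp
  qed
  then show "card {b \<in> blocks. y \<in> b \<and> z \<in> b} = 1" by simp
qed

lemma cls_eq:
  assumes "d \<in> E" "d \<noteq> \<zero>" "d' \<in> E" "x \<in> E" "x' \<in> E" "line x d = line x' d'"
  shows "cls d = cls d'"
proof -
  have x1: "x \<in> line x' d'" "x \<oplus> d \<in> line x' d'"
    using line_base[OF assms(4,1)] line_step[OF assms(4,1)] assms(6) by auto
  have "x \<noteq> x \<oplus> d" using assms Ec by auto
  then obtain u where u: "u \<in> F" "u \<noteq> \<zero>" "(x \<oplus> d) \<ominus> x = u \<otimes> d'"
    using line_dir[OF assms(5,3) x1] by blast
  have "(x \<oplus> d) \<ominus> x = d" using assms Ec by algebra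
  then have du: "d = u \<otimes> d'" using u by simp
  have "line w d = line w d'" if "w \<in> E" for w using line_scale[OF that assms(3) u(1,2)] du by simp
  then show ?thesis by (auto simp: cls_def)
qed

lemma design_resolvable: "resolvable E blocks"
  unfolding resolvable_def
proof (intro exI[of _ parts] conjI ballI)
  fix C assume "C \<in> parts"
  then obtain d where C: "C = cls d" "d \<in> E" "d \<noteq> \<zero>" by (auto simp: parts_def)
  show "C \<subseteq> blocks" using C by (auto simp: cls_def blocks_def)
  show "partitions_points E C"
    unfolding partitions_points_def
  proof (intro conjI ballI)
    fix c assume "c \<in> C" then show "c \<subseteq> E" using C line_sub by (auto simp: cls_def)
  next
    fix y assume y: "y \<in> E"
    show "\<exists>!c. c \<in> C \<and> y \<in> c"
    proof (rule ex1I[of _ "line y d"])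
      show "line y d \<in> C \<and> y \<in> line y d" using C y line_base by (auto simp: cls_def)
    next
      fix c assume "c \<in> C \<and> y \<in> c"
      then obtain x where hx: "c = line x d" "x \<in> E" "y \<in> c" using C by (auto simp: cls_def)
      have "line y d = line x d" by (rule line_shift) (use hx C in auto)
      then show "c = line y d" using hx by simp
    qed
  qed
next
  fix b assume "b \<in> blocks"
  then obtain x d where b: "b = line x d" "x \<in> E" "d \<in> E" "d \<noteq> \<zero>" by (auto simp: blocks_def)
  show "\<exists>!C. C \<in> parts \<and> b \<in> C"
  proof (rule ex1I[of _ "cls d"])
    show "cls d \<in> parts \<and> b \<in> cls d" using b by (auto simp: parts_def cls_def)
  next
    fix C assume "C \<in> parts \<and> b \<in> C"
    then obtain d' x' where h: "C = cls d'" "d' \<in> E" "x' \<in> E" "b = line x' d'"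
      by (auto simp: parts_def cls_def)
    have "cls d = cls d'" by (rule cls_eq[OF b(3,4) h(2) b(2) h(3)]) (use b h in simp)
    then show "C = cls d" using h by simp
  qed
qed

lemma design_rbibd: "rbibd E blocks (card E) (card F) 1"
  using design_bibd design_resolvable by (simp add: rbibd_def)

end




lemma pow_mod_pred: "(x::nat) \<ge> 1 \<Longrightarrow> x ^ n mod (x - 1) = 1 mod (x - 1)"
proof (induction n)
  case 0 then show ?case by simp
next
  case (Suc n)
  have xm: "x mod (x - 1) = 1 mod (x - 1)"
  proof -
    have "x = (x - 1) + 1" using Suc.prems by simp
    then have "x mod (x - 1) = ((x - 1) + 1) mod (x - 1)" by simp
    also have "\<dots> = 1 mod (x - 1)" by (simp only: mod_add_self1)
    finally show ?thesis .
  qed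
  have "x ^ Suc n mod (x - 1) = ((x mod (x - 1)) * (x ^ n mod (x - 1))) mod (x - 1)"
    by (simp add: mod_mult_eq)
  also have "\<dots> = 1 mod (x - 1)" using xm Suc by (simp add: mod_mult_eq)
  finally show ?case .
qed

lemma exp_dvd_from_mod:
  fixes p a c :: nat
  assumes p: "p \<ge> 2" and c: "c \<ge> 1" and h: "(p ^ a - 1) mod (p ^ c - 1) = 0"
  shows "c dvd a"
proof (cases "c = 1")
  case True then show ?thesis by simp
next
  case False
  then have c2: "c \<ge> 2" using c by simp
  define M where "M = p ^ c - 1"
  have "p ^ 2 \<le> p ^ c" using c2 p by (intro power_increasing) auto
  moreover have "p ^ 2 \<ge> 4" using p by (metis power2_nat_le_eq_le power2_eq_square numeral_Bit0 numeral_One mult_2 one_add_one power2_eq_square)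
  ultimately have M3: "M \<ge> 3" by (simp add: M_def)
  define j where "j = a div c"
  define r where "r = a mod c"
  have a_eq: "a = c * j + r" by (simp add: j_def r_def)
  have pa: "p ^ a = (p ^ c) ^ j * p ^ r" by (simp add: a_eq power_add power_mult)
  have pc1: "p ^ c \<ge> 1" using p by simp
  have "p ^ a mod M = (((p ^ c) ^ j mod M) * (p ^ r mod M)) mod M" by (simp add: pa mod_mult_eq)
  also have "(p ^ c) ^ j mod M = 1 mod M" unfolding M_def by (rule pow_mod_pred[OF pc1])
  also have "(1 mod M * (p ^ r mod M)) mod M = p ^ r mod M" using M3 by simp
  finally have A: "p ^ a mod M = p ^ r mod M" .
  have pa1: "p ^ a \<ge> 1" using p by simp
  have e: "(p ^ a - 1) + 1 = p ^ a" using pa1 by simp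
  have "p ^ a mod M = ((p ^ a - 1) + 1) mod M" by (simp only: e)
  also have "\<dots> = ((p ^ a - 1) mod M + 1) mod M" by (rule mod_add_left_eq[symmetric])
  also have "\<dots> = 1" using h M3 by (simp add: M_def)
  finally have B: "p ^ r mod M = 1" using A by simp
  have "r < c" using c by (simp add: r_def)
  then have "p ^ r < p ^ c" using p by (intro power_strict_increasing) auto
  then have "p ^ r \<le> M" by (simp add: M_def)
  moreover have "p ^ r \<noteq> M" using B M3 by auto
  ultimately have "p ^ r mod M = p ^ r" by simp
  then have "p ^ r = 1" using B by simp
  then have "r = 0" using p by simp
  then show ?thesis by (simp add: r_def mod_0_imp_dvd)
qed

lemma bibd_divisibility:
  assumes d: "rbibd X B v k 1" and v2: "v \<ge> 2" and k2: "k \<ge> 2"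
  shows "(v - 1) mod (k - 1) = 0 \<and> v mod k = 0"
proof -
  have fin: "finite X" and cX: "card X = v" and blk: "\<And>b. b \<in> B \<Longrightarrow> b \<subseteq> X \<and> card b = k"
    and pair: "\<And>x y. x \<in> X \<Longrightarrow> y \<in> X \<Longrightarrow> x \<noteq> y \<Longrightarrow> card {b\<in>B. x \<in> b \<and> y \<in> b} = 1"
    using d by (auto simp: rbibd_def bibd_def)
  have finB: "finite B" using blk fin by (metis Pow_iff finite_Pow_iff finite_subset subsetI)
  obtain x where x: "x \<in> X" using cX v2 by fastforce
  obtain y where y: "y \<in> X" "y \<noteq> x"
  proof -
    have "card (X - {x}) \<ge> 1" using cX v2 x fin by simp
    then have "X - {x} \<noteq> {}" by (metis card.empty not_one_le_zero)
    then show ?thesis using that by blast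
  qed
  have ex_block: "\<exists>b\<in>B. x \<in> b \<and> z \<in> b" if "z \<in> X" "z \<noteq> x" for z
  proof -
    have "card {b\<in>B. x \<in> b \<and> z \<in> b} = 1" using pair[OF x that(1)] that(2) by simp
    then have "{b\<in>B. x \<in> b \<and> z \<in> b} \<noteq> {}" by (metis card.empty zero_neq_one)
    then show ?thesis by blast
  qed
  have uniq_block: "b1 = b2" if "b1 \<in> B" "b2 \<in> B" "x \<in> b1" "x \<in> b2" "z \<in> b1" "z \<in> b2" "z \<in> X" "z \<noteq> x" for b1 b2 z
  proof (rule ccontr)
    assume ne: "b1 \<noteq> b2"
    have "{b1, b2} \<subseteq> {b\<in>B. x \<in> b \<and> z \<in> b}" using that by auto
    then have "card {b1, b2} \<le> card {b\<in>B. x \<in> b \<and> z \<in> b}" using finB by (intro card_mono) auto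
    then show False using pair[OF x that(7)] that(8) ne by simp
  qed
  define Bx where "Bx = {b\<in>B. x \<in> b}"
  have "X - {x} = (\<Union>b\<in>Bx. b - {x})"
  proof (intro equalityI subsetI)
    fix z assume "z \<in> X - {x}"
    then obtain b where "b \<in> B" "x \<in> b" "z \<in> b" using ex_block by blast
    then show "z \<in> (\<Union>b\<in>Bx. b - {x})" using \<open>z \<in> X - {x}\<close> by (auto simp: Bx_def)
  next
    fix z assume "z \<in> (\<Union>b\<in>Bx. b - {x})"
    then show "z \<in> X - {x}" using blk by (auto simp: Bx_def)
  qed
  then have "card (X - {x}) = card (\<Union>b\<in>Bx. b - {x})" by simp
  also have "\<dots> = (\<Sum>b\<in>Bx. card (b - {x}))"
  proof (rule card_UN_disjoint)
    show "finite Bx" using finB by (simp add: Bx_def)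
    show "\<forall>i\<in>Bx. finite (i - {x})" using blk fin by (auto simp: Bx_def intro: finite_subset)
    show "\<forall>i\<in>Bx. \<forall>j\<in>Bx. i \<noteq> j \<longrightarrow> (i - {x}) \<inter> (j - {x}) = {}"
    proof (intro ballI impI)
      fix i j assume "i \<in> Bx" "j \<in> Bx" "i \<noteq> j"
      then show "(i - {x}) \<inter> (j - {x}) = {}"
        using uniq_block[of i j] blk by (auto simp: Bx_def)
    qed
  qed
  also have "\<dots> = (\<Sum>b\<in>Bx. k - 1)"
    by (rule sum.cong) (use blk x in \<open>auto simp: Bx_def\<close>)
  finally have "v - 1 = card Bx * (k - 1)" using cX x fin by simp
  then have c1: "(v - 1) mod (k - 1) = 0" by simp
  obtain b0 where b0: "b0 \<in> B" using ex_block[OF y] by blast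
  have "resolvable X B" using d by (simp add: rbibd_def)
  then obtain P where PP: "(\<forall>C\<in>P. C \<subseteq> B \<and> partitions_points X C) \<and> (\<forall>b\<in>B. \<exists>!C. C \<in> P \<and> b \<in> C)"
    unfolding resolvable_def by (elim exE)
  have P: "\<And>C. C \<in> P \<Longrightarrow> C \<subseteq> B \<and> partitions_points X C" using PP by simp
  have P2: "\<And>b. b \<in> B \<Longrightarrow> \<exists>!C. C \<in> P \<and> b \<in> C" using PP by simp
  obtain C where C: "C \<in> P" "b0 \<in> C" using P2[OF b0] by blast
  have CB: "C \<subseteq> B" and Cs: "\<And>c. c \<in> C \<Longrightarrow> c \<subseteq> X" and Cu: "\<And>z. z \<in> X \<Longrightarrow> \<exists>!c. c \<in> C \<and> z \<in> c"
    using P[OF C(1)] by (auto simp: partitions_points_def)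
  have "X = \<Union>C" using Cs Cu by blast
  moreover have "card (\<Union>C) = sum card C"
  proof (rule card_Union_disjoint)
    show "pairwise disjnt C"
      unfolding pairwise_def disjnt_def
    proof (intro ballI impI)
      fix c1 c2 assume h: "c1 \<in> C" "c2 \<in> C" "c1 \<noteq> c2"
      show "c1 \<inter> c2 = {}"
      proof (rule ccontr)
        assume "c1 \<inter> c2 \<noteq> {}"
        then obtain z where "z \<in> c1" "z \<in> c2" by blast
        then show False using Cu[of z] Cs h by blast
      qed
    qed
    show "\<And>A. A \<in> C \<Longrightarrow> finite A" using Cs fin finite_subset by blast
  qed
  moreover have "sum card C = card C * k"
  proof -
    have "sum card C = (\<Sum>c\<in>C. k)" by (rule sum.cong) (use CB blk in auto)
    then show ?thesis by simp
  qed
  ultimately have "v = card C * k" using cX by simp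
  then have "v mod k = 0" by simp
  with c1 show ?thesis by simp
qed





lemma rbibd_image:
  assumes inj: "inj_on f X" and d: "rbibd X B v k l"
  shows "rbibd (f ` X) ((`) f ` B) v k l"
proof -
  have fin: "finite X" and cX: "card X = v" and blk: "\<And>b. b \<in> B \<Longrightarrow> b \<subseteq> X \<and> card b = k"
    and pair: "\<And>x y. x \<in> X \<Longrightarrow> y \<in> X \<Longrightarrow> x \<noteq> y \<Longrightarrow> card {b\<in>B. x \<in> b \<and> y \<in> b} = l"
    using d by (auto simp: rbibd_def bibd_def)
  have injP: "inj_on ((`) f) (Pow X)" using inj by (rule inj_on_image_Pow)
  have memb: "f x \<in> f ` b \<longleftrightarrow> x \<in> b" if "b \<subseteq> X" "x \<in> X" for b x
    using inj that by (auto dest: inj_onD)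
  have eqb: "f ` b1 = f ` b2 \<longleftrightarrow> b1 = b2" if "b1 \<subseteq> X" "b2 \<subseteq> X" for b1 b2
    using injP that by (auto dest: inj_onD)
  have bibd': "bibd (f ` X) ((`) f ` B) v k l"
    unfolding bibd_def
  proof (intro conjI ballI impI)
    show "finite (f ` X)" using fin by simp
    show "card (f ` X) = v" using card_image[OF inj] cX by simp
  next
    fix b' assume "b' \<in> (`) f ` B"
    then obtain b where b: "b \<in> B" "b' = f ` b" by auto
    show "b' \<subseteq> f ` X" using b blk by auto
    show "card b' = k" using b blk card_image[OF inj_on_subset[OF inj, of b]] by auto
  next
    fix x' y' assume h: "x' \<in> f ` X" "y' \<in> f ` X" "x' \<noteq> y'"
    then obtain x y where xy: "x \<in> X" "y \<in> X" "x' = f x" "y' = f y" by auto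
    then have xny: "x \<noteq> y" using h by auto
    have "{b' \<in> (`) f ` B. x' \<in> b' \<and> y' \<in> b'} = (`) f ` {b\<in>B. x \<in> b \<and> y \<in> b}"
      unfolding xy(3,4)
    proof (intro equalityI subsetI)
      fix b' assume "b' \<in> {b' \<in> (`) f ` B. f x \<in> b' \<and> f y \<in> b'}"
      then obtain b where b: "b \<in> B" "b' = f ` b" "f x \<in> f ` b" "f y \<in> f ` b" by auto
      then have "x \<in> b" "y \<in> b" using memb[of b] blk xy(1,2) by auto
      then show "b' \<in> (`) f ` {b\<in>B. x \<in> b \<and> y \<in> b}" using b by auto
    next
      fix b' assume "b' \<in> (`) f ` {b\<in>B. x \<in> b \<and> y \<in> b}"
      then obtain b where "b \<in> B" "x \<in> b" "y \<in> b" "b' = f ` b" by blast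
      then show "b' \<in> {b' \<in> (`) f ` B. f x \<in> b' \<and> f y \<in> b'}" by blast
    qed
    moreover have "inj_on ((`) f) {b\<in>B. x \<in> b \<and> y \<in> b}"
      by (rule inj_on_subset[OF injP]) (use blk in auto)
    ultimately show "card {b' \<in> (`) f ` B. x' \<in> b' \<and> y' \<in> b'} = l"
      using pair[OF xy(1,2) xny] card_image by (metis (no_types, lifting))
  qed
  have "resolvable X B" using d by (simp add: rbibd_def)
  then obtain P where PP: "(\<forall>C\<in>P. C \<subseteq> B \<and> partitions_points X C) \<and> (\<forall>b\<in>B. \<exists>!C. C \<in> P \<and> b \<in> C)"
    unfolding resolvable_def by (elim exE)
  have P: "\<And>C. C \<in> P \<Longrightarrow> C \<subseteq> B \<and> partitions_points X C" using PP by simp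
  have P2: "\<And>b. b \<in> B \<Longrightarrow> \<exists>!C. C \<in> P \<and> b \<in> C" using PP by simp
  have res': "resolvable (f ` X) ((`) f ` B)"
    unfolding resolvable_def
  proof (rule exI[of _ "(\<lambda>C. (`) f ` C) ` P"], intro conjI ballI)
    fix C' assume "C' \<in> (\<lambda>C. (`) f ` C) ` P"
    then obtain C where C: "C \<in> P" "C' = (`) f ` C" by auto
    have CB: "C \<subseteq> B" and Cs: "\<And>c. c \<in> C \<Longrightarrow> c \<subseteq> X" and Cu: "\<And>z. z \<in> X \<Longrightarrow> \<exists>!c. c \<in> C \<and> z \<in> c"
      using P[OF C(1)] by (auto simp: partitions_points_def)
    show "C' \<subseteq> (`) f ` B" using C CB by auto
    show "partitions_points (f ` X) C'"
      unfolding partitions_points_def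
    proof (intro conjI ballI)
      fix c' assume "c' \<in> C'" then show "c' \<subseteq> f ` X" using C Cs by auto
    next
      fix x' assume "x' \<in> f ` X"
      then obtain x where x: "x \<in> X" "x' = f x" by auto
      obtain c where c: "c \<in> C" "x \<in> c" using Cu[OF x(1)] by auto
      show "\<exists>!c'. c' \<in> C' \<and> x' \<in> c'"
      proof (rule ex1I[of _ "f ` c"])
        show "f ` c \<in> C' \<and> x' \<in> f ` c" using c C x by auto
      next
        fix c1' assume h: "c1' \<in> C' \<and> x' \<in> c1'"
        then obtain c1 where c1: "c1 \<in> C" "c1' = f ` c1" using C by auto
        then have "x \<in> c1" using h x memb Cs by auto
        then have "c1 = c" using Cu[OF x(1)] c c1 by auto
        then show "c1' = f ` c" using c1 by simp
      qed
    qed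
  next
    fix b' assume "b' \<in> (`) f ` B"
    then obtain b where b: "b \<in> B" "b' = f ` b" by auto
    obtain C where C: "C \<in> P" "b \<in> C" using P2[OF b(1)] by auto
    show "\<exists>!C'. C' \<in> (\<lambda>C. (`) f ` C) ` P \<and> b' \<in> C'"
    proof (rule ex1I[of _ "(`) f ` C"])
      show "(`) f ` C \<in> (\<lambda>C. (`) f ` C) ` P \<and> b' \<in> (`) f ` C" using C b by auto
    next
      fix C1' assume h: "C1' \<in> (\<lambda>C. (`) f ` C) ` P \<and> b' \<in> C1'"
      then obtain C1 where C1: "C1 \<in> P" "C1' = (`) f ` C1" by auto
      then obtain b1 where b1: "b1 \<in> C1" "b' = f ` b1" using h by auto
      have "b1 \<in> B" using P[OF C1(1)] b1 by auto
      then have "b1 = b" using eqb[of b1 b] blk b b1 by auto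
      then have "C1 = C" using P2[OF b(1)] C C1 b1 by auto
      then show "C1' = (`) f ` C" using C1 by simp
    qed
  qed
  show ?thesis using bibd' res' by (simp add: rbibd_def)
qed





context field begin

lemma S_zero: assumes "Factorial_Ring.prime (p::nat)" shows "\<zero> [^] (p ^ m) = \<zero>"
  using assms by (intro nat_pow_zero) (simp add: prime_gt_0_nat)

lemma S_mult: "x \<in> carrier R \<Longrightarrow> y \<in> carrier R \<Longrightarrow> x [^] (n::nat) = x \<Longrightarrow> y [^] n = y \<Longrightarrow> (x \<otimes> y) [^] n = x \<otimes> y"
proof -
  assume "x \<in> carrier R" "y \<in> carrier R" "x [^] n = x" "y [^] n = y"
  then show ?thesis using nat_pow_distrib[of x y n] by simp
qed

lemma S_neg:
  assumes pr: "Factorial_Ring.prime (p::nat)" and ch: "[p] \<cdot> \<one> = \<zero>" and x: "x \<in> carrier R"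
    and h: "x [^] (p ^ m) = x"
  shows "(\<ominus> x) [^] (p ^ m) = \<ominus> x"
proof -
  have "(\<zero> \<ominus> x) [^] (p ^ m) = \<zero> [^] (p ^ m) \<ominus> x [^] (p ^ m)" by (rule frob_pow_minus[OF pr ch zero_closed x])
  then show ?thesis using S_zero[OF pr] h x by (simp add: a_minus_def)
qed

lemma S_inv:
  assumes x: "x \<in> carrier R" "x \<noteq> \<zero>" and h: "x [^] (n::nat) = x"
  shows "inv x [^] n = inv x"
proof -
  have xu: "x \<in> Units R" using x field_Units by auto
  have ic: "inv x \<in> carrier R" and il: "inv x \<otimes> x = \<one>" and ir: "x \<otimes> inv x = \<one>" using xu by auto
  have "inv x [^] n \<otimes> x = inv x [^] n \<otimes> x [^] n" using h by simp
  also have "\<dots> = (inv x \<otimes> x) [^] n" using ic x by (simp add: nat_pow_distrib)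
  also have "\<dots> = \<one>" using il by simp
  finally have e: "inv x [^] n \<otimes> x = \<one>" .
  have "inv x [^] n = inv x [^] n \<otimes> (x \<otimes> inv x)" using ir ic by simp
  also have "\<dots> = (inv x [^] n \<otimes> x) \<otimes> inv x" using ic x by (simp add: m_assoc)
  also have "\<dots> = inv x" using e ic by simp
  finally show ?thesis .
qed

lemma S_sub:
  assumes x: "x \<in> carrier R" and h: "x [^] ((p::nat) ^ c) = x"
  shows "x [^] (p ^ (c * j)) = x"
proof (induction j)
  case 0 then show ?case using x by simp
next
  case (Suc j)
  have "x [^] (p ^ (c * Suc j)) = (x [^] (p ^ (c * j))) [^] (p ^ c)"
    using x by (simp add: nat_pow_pow power_add mult.commute)
  also have "\<dots> = x" using Suc h by simp
  finally show ?case .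
qed

lemma aff_frob:
  assumes pr: "Factorial_Ring.prime (p::nat)" and ch: "[p] \<cdot> \<one> = \<zero>" and cd: "c dvd a"
    and fin: "finite {x \<in> carrier R. x [^] (p ^ a) = x}"
  shows "aff R {x \<in> carrier R. x [^] (p ^ a) = x} {x \<in> carrier R. x [^] (p ^ c) = x}"
proof -
  obtain j where a: "a = c * j" using cd by blast
  have add: "(x \<oplus> y) [^] (p ^ m) = x \<oplus> y"
    if "x \<in> carrier R" "y \<in> carrier R" "x [^] (p ^ m) = x" "y [^] (p ^ m) = y" for x y m
    using frob_pow_add[OF pr ch that(1,2)] that by simp
  have neg: "(\<ominus> x) [^] (p ^ m) = \<ominus> x" if "x \<in> carrier R" "x [^] (p ^ m) = x" for x m
    using S_neg[OF pr ch that] .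
  have mul: "(x \<otimes> y) [^] (p ^ m) = x \<otimes> y"
    if "x \<in> carrier R" "y \<in> carrier R" "x [^] (p ^ m) = x" "y [^] (p ^ m) = y" for x y m
    using S_mult[OF that] .
  have iv: "inv x [^] (p ^ m) = inv x" if "x \<in> carrier R" "x \<noteq> \<zero>" "x [^] (p ^ m) = x" for x m
    using S_inv[OF that] .
  have icl: "inv x \<in> carrier R" if "x \<in> carrier R" "x \<noteq> \<zero>" for x
    using that field_Units by auto
  have z: "\<zero> [^] (p ^ m) = \<zero>" for m using S_zero[OF pr] .
  have sub: "x [^] (p ^ a) = x" if "x \<in> carrier R" "x [^] (p ^ c) = x" for x
    using S_sub[OF that, of j] by (simp add: a)
  show ?thesis
  proof (intro aff.intro field_axioms aff_axioms.intro)
    show "{x \<in> carrier R. x [^] p ^ a = x} \<subseteq> carrier R" by auto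
    show "{x \<in> carrier R. x [^] p ^ c = x} \<subseteq> {x \<in> carrier R. x [^] p ^ a = x}" using sub by auto
    show "finite {x \<in> carrier R. x [^] p ^ a = x}" by (rule fin)
  qed (auto simp: add neg mul iv icl z)
qed

end


theorem theorem3:
  fixes p a c v k :: nat
  assumes "prime p"
    and "v = p ^ a" and "a \<ge> 1"
    and "k = p ^ c" and "k \<ge> 2"
  shows "(\<exists>(X :: nat set) (B :: nat set set). rbibd X B v k 1)
         \<longleftrightarrow> (v - 1) mod (k - 1) = 0 \<and> v mod k = 0"
proof
  have p2: "p \<ge> 2" using assms(1) prime_ge_2_nat by blast
  have "p ^ 1 \<le> p ^ a" using assms(3) p2 by (intro power_increasing) auto
  then have v2: "v \<ge> 2" using p2 assms(2) by simp
  assume "\<exists>(X :: nat set) (B :: nat set set). rbibd X B v k 1"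
  then obtain X :: "nat set" and B where "rbibd X B v k 1" by blast
  then show "(v - 1) mod (k - 1) = 0 \<and> v mod k = 0" using bibd_divisibility v2 assms(5) by blast
next
  assume h: "(v - 1) mod (k - 1) = 0 \<and> v mod k = 0"
  have p2: "p \<ge> 2" using assms(1) prime_ge_2_nat by blast
  have c1: "c \<ge> 1"
  proof (rule ccontr)
    assume "\<not> c \<ge> 1" then have "c = 0" by simp
    then show False using assms(4,5) by simp
  qed
  have cd: "c dvd a" using exp_dvd_from_mod[OF p2 c1] h assms(2,4) by simp
  obtain L :: "((int list \<times> nat) multiset \<Rightarrow> int) ring"
    where ac: "algebraically_closed L" and ch: "[p] \<cdot>\<^bsub>L\<^esub> \<one>\<^bsub>L\<^esub> = \<zero>\<^bsub>L\<^esub>"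
    using exists_char_p_closure[OF assms(1)] by blast
  interpret AC: algebraically_closed L by (rule ac)
  define E where "E = {x \<in> carrier L. x [^]\<^bsub>L\<^esub> (p ^ a) = x}"
  define F where "F = {x \<in> carrier L. x [^]\<^bsub>L\<^esub> (p ^ c) = x}"
  have cE: "card E = v" using AC.frob_fixed_card[OF assms(1) ch assms(3)] assms(2) by (simp add: E_def)
  have cF: "card F = k" using AC.frob_fixed_card[OF assms(1) ch c1] assms(4) by (simp add: F_def)
  have "v > 0" using p2 assms(2) by simp
  then have finE: "finite E" using cE card_gt_0_iff by metis
  have A: "aff L E F" unfolding E_def F_def
    by (rule AC.aff_frob[OF assms(1) ch cd]) (use finE in \<open>simp add: E_def\<close>)
  interpret A: aff L E F by (rule A)
  have r: "rbibd E A.blocks v k 1" using A.design_rbibd cE cF by simp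
  obtain f :: "_ \<Rightarrow> nat" and n where "f ` E = {i. i < n}" "inj_on f E"
    using finite_imp_inj_to_nat_seg[OF finE] by blast
  then have "rbibd (f ` E) ((`) f ` A.blocks) v k 1" using rbibd_image r by blast
  then show "\<exists>(X :: nat set) (B :: nat set set). rbibd X B v k 1" by blast
qed



end
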